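(* Let $(X,<)$ be a Banach lattice with lattice norm $\|\cdot\|$, and let $A=(\alpha_{ij})_{i,j\in\mathbb{N}}$ be a regular matrix with non-negative entries. Then the $A$-convergence on $X$ preserves order-inequalities.
   Context: A non-negative matrix $A=(\alpha_{ij})$ is regular if $\sup_n\sum_j\alpha_{nj}<\infty$, $\lim_n\alpha_{ni}=0$ for each $i$, and $\lim_n\sum_i\alpha_{ni}=1$. A sequence $(x_j)$ in $X$ is $A$-convergent to $L$ (written $x_j\overset{A}{\longrightarrow}L$) if $\lim_n\sum_j\alpha_{nj}x_j=L$ in norm; the $A$-convergence is the summability method with domain $\mathcal{D}_A$ the $A$-convergent sequences. For $u\in X$, $|u|=u\vee(-u)$. A summability method $\mathcal{R}$ preserves order-inequalities if: whenever $(w_n),(x_n),(y_n),(z_n)\in\mathcal{D}_{\mathcal{R}}$, $w,x,y,z\in X$ and $C>0$ satisfy, for all $n$, $-C[(x_n-x)+(y_n-y)+(z_n-z)]<w_n-w<C[(x_n-x)+(y_n-y)+(z_n-z)]$ in the lattice order, and $x_n\overset{\mathcal{R}}{\longrightarrow}x$, $y_n\overset{\mathcal{R}}{\longrightarrow}y$, $z_n\overset{\mathcal{R}}{\longrightarrow}z$, then $w_n\overset{\mathcal{R}}{\longrightarrow}w$. *)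

theory Defs
  imports "HOL-Analysis.Analysis"
begin

text \<open>A (real) Banach lattice: a Banach space which is a vector lattice
  (Riesz space) whose norm is a lattice norm, i.e. the modulus
  \<open>|u| = sup u (-u)\<close> satisfies \<open>|u| \<le> |v| \<Longrightarrow> norm u \<le> norm v\<close>.\<close>

class banach_lattice = banach + ordered_real_vector + lattice +
  assumes lattice_norm: "sup u (- u) \<le> sup v (- v) \<Longrightarrow> norm u \<le> norm v"

definition regular_matrix :: "(nat \<Rightarrow> nat \<Rightarrow> real) \<Rightarrow> bool" where
  "regular_matrix \<alpha> \<longleftrightarrow>
     (\<forall>n. summable (\<alpha> n)) \<and> bdd_above (range (\<lambda>n. \<Sum>j. \<alpha> n j)) \<and>
     (\<forall>i. (\<lambda>n. \<alpha> n i) \<longlonglongrightarrow> 0) \<and>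
     (\<lambda>n. \<Sum>j. \<alpha> n j) \<longlonglongrightarrow> 1"

definition A_conv :: "(nat \<Rightarrow> nat \<Rightarrow> real) \<Rightarrow> (nat \<Rightarrow> 'a::real_normed_vector) \<Rightarrow> 'a \<Rightarrow> bool" where
  "A_conv \<alpha> x L \<longleftrightarrow>
     (\<forall>n. summable (\<lambda>j. \<alpha> n j *\<^sub>R x j)) \<and>
     (\<lambda>n. \<Sum>j. \<alpha> n j *\<^sub>R x j) \<longlonglongrightarrow> L"

text \<open>A summability method is given by its convergence relation \<open>R s L\<close>
  ("s is R-convergent to L"); its domain is the set of R-convergent sequences.\<close>
definition summability_domain :: "((nat \<Rightarrow> 'a) \<Rightarrow> 'a \<Rightarrow> bool) \<Rightarrow> (nat \<Rightarrow> 'a) set" where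
  "summability_domain R = {s. \<exists>L. R s L}"

definition preserves_order_inequalities ::
  "((nat \<Rightarrow> 'a::{ordered_ab_group_add, real_vector}) \<Rightarrow> 'a \<Rightarrow> bool) \<Rightarrow> bool" where
  "preserves_order_inequalities R \<longleftrightarrow>
     (\<forall>ws xs ys zs w x y z (C::real).
        ws \<in> summability_domain R \<and> xs \<in> summability_domain R \<and>
        ys \<in> summability_domain R \<and> zs \<in> summability_domain R \<and> C > 0 \<and>
        (\<forall>n. - (C *\<^sub>R ((xs n - x) + (ys n - y) + (zs n - z))) \<le> ws n - w \<and>
             ws n - w \<le> C *\<^sub>R ((xs n - x) + (ys n - y) + (zs n - z))) \<and>
        R xs x \<and> R ys y \<and> R zs z
        \<longrightarrow> R ws w)"

end

theory Submission
  imports Defs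
begin

lemma bl_norm_le:
  fixes v a :: "'a::banach_lattice"
  assumes "- a \<le> v" "v \<le> a"
  shows "norm v \<le> norm a"
proof -
  have "- v \<le> a" using assms(1) by (metis minus_le_iff)
  then have "sup v (- v) \<le> a" using assms(2) by simp
  also have "a \<le> sup a (- a)" by simp
  finally show ?thesis by (rule lattice_norm)
qed

lemma partial_bound:
  fixes u v :: "nat \<Rightarrow> 'a::banach_lattice"
  assumes "\<And>j. - (C *\<^sub>R u j) \<le> v j \<and> v j \<le> C *\<^sub>R u j"
    and "\<And>j. a j \<ge> 0" and "C > 0"
  shows "norm (\<Sum>j<N. a j *\<^sub>R v j) \<le> C * norm (\<Sum>j<N. a j *\<^sub>R u j)"
proof -
  have 1: "(\<Sum>j<N. a j *\<^sub>R v j) \<le> C *\<^sub>R (\<Sum>j<N. a j *\<^sub>R u j)"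
    unfolding scaleR_sum_right
  proof (rule sum_mono)
    fix j
    have "a j *\<^sub>R v j \<le> a j *\<^sub>R (C *\<^sub>R u j)"
      using assms by (intro scaleR_left_mono) auto
    then show "a j *\<^sub>R v j \<le> C *\<^sub>R (a j *\<^sub>R u j)" by (simp add: mult.commute)
  qed
  have 2: "- (C *\<^sub>R (\<Sum>j<N. a j *\<^sub>R u j)) \<le> (\<Sum>j<N. a j *\<^sub>R v j)"
    unfolding scaleR_sum_right sum_negf[symmetric]
  proof (rule sum_mono)
    fix j
    have "a j *\<^sub>R (- (C *\<^sub>R u j)) \<le> a j *\<^sub>R v j"
      using assms by (intro scaleR_left_mono) auto
    then show "- (C *\<^sub>R (a j *\<^sub>R u j)) \<le> a j *\<^sub>R v j" by (simp add: mult.commute)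
  qed
  have "norm (\<Sum>j<N. a j *\<^sub>R v j) \<le> norm (C *\<^sub>R (\<Sum>j<N. a j *\<^sub>R u j))"
    by (rule bl_norm_le[OF 2 1])
  then show ?thesis using assms(3) by simp
qed

theorem theorem3p8:
  fixes \<alpha> :: "nat \<Rightarrow> nat \<Rightarrow> real"
  assumes "regular_matrix \<alpha>"
    and "\<And>i j. \<alpha> i j \<ge> 0"
  shows "preserves_order_inequalities (A_conv \<alpha> :: (nat \<Rightarrow> 'a::banach_lattice) \<Rightarrow> 'a \<Rightarrow> bool)"
  unfolding preserves_order_inequalities_def
proof (intro allI impI, elim conjE)
  fix ws xs ys zs :: "nat \<Rightarrow> 'a" and w x y z :: 'a and C :: real
  assume wd: "ws \<in> summability_domain (A_conv \<alpha>)" and C: "C > 0"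
    and ineq: "\<forall>n. - (C *\<^sub>R ((xs n - x) + (ys n - y) + (zs n - z))) \<le> ws n - w \<and>
             ws n - w \<le> C *\<^sub>R ((xs n - x) + (ys n - y) + (zs n - z))"
    and ax: "A_conv \<alpha> xs x" and ay: "A_conv \<alpha> ys y" and az: "A_conv \<alpha> zs z"
  have sa: "\<And>n. summable (\<alpha> n)" and s1: "(\<lambda>n. \<Sum>j. \<alpha> n j) \<longlonglongrightarrow> 1"
    using assms(1) unfolding regular_matrix_def by auto
  define s where "s n = (\<Sum>j. \<alpha> n j)" for n
  define Sx where "Sx n = (\<Sum>j. \<alpha> n j *\<^sub>R xs j)" for n
  define Sy where "Sy n = (\<Sum>j. \<alpha> n j *\<^sub>R ys j)" for n
  define Sz where "Sz n = (\<Sum>j. \<alpha> n j *\<^sub>R zs j)" for n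
  define Sw where "Sw n = (\<Sum>j. \<alpha> n j *\<^sub>R ws j)" for n
  define u where "u j = (xs j - x) + (ys j - y) + (zs j - z)" for j
  define v where "v j = ws j - w" for j
  have sw: "summable (\<lambda>j. \<alpha> n j *\<^sub>R ws j)" for n
    using wd unfolding summability_domain_def A_conv_def by auto
  have ssn: "\<alpha> n sums s n" for n using sa s_def by (simp add: summable_sums)
  have sc: "(\<lambda>j. \<alpha> n j *\<^sub>R c) sums (s n *\<^sub>R c)" for n and c :: 'a
    by (rule sums_scaleR_left[OF ssn])
  have sxs: "(\<lambda>j. \<alpha> n j *\<^sub>R xs j) sums Sx n" for n
    using ax unfolding A_conv_def Sx_def by (simp add: summable_sums)
  have sys: "(\<lambda>j. \<alpha> n j *\<^sub>R ys j) sums Sy n" for n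
    using ay unfolding A_conv_def Sy_def by (simp add: summable_sums)
  have szs: "(\<lambda>j. \<alpha> n j *\<^sub>R zs j) sums Sz n" for n
    using az unfolding A_conv_def Sz_def by (simp add: summable_sums)
  have sws: "(\<lambda>j. \<alpha> n j *\<^sub>R ws j) sums Sw n" for n
    using sw unfolding Sw_def by (simp add: summable_sums)
  define U where "U n = (Sx n - s n *\<^sub>R x) + (Sy n - s n *\<^sub>R y) + (Sz n - s n *\<^sub>R z)" for n
  define V where "V n = Sw n - s n *\<^sub>R w" for n
  have su: "(\<lambda>j. \<alpha> n j *\<^sub>R u j) sums U n" for n
  proof -
    have "(\<lambda>j. (\<alpha> n j *\<^sub>R xs j - \<alpha> n j *\<^sub>R x) + (\<alpha> n j *\<^sub>R ys j - \<alpha> n j *\<^sub>R y)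
       + (\<alpha> n j *\<^sub>R zs j - \<alpha> n j *\<^sub>R z)) sums U n"
      unfolding U_def by (intro sums_add sums_diff sxs sys szs sc)
    then show ?thesis by (simp add: u_def scaleR_right_diff_distrib scaleR_right_distrib)
  qed
  have sv: "(\<lambda>j. \<alpha> n j *\<^sub>R v j) sums V n" for n
  proof -
    have "(\<lambda>j. \<alpha> n j *\<^sub>R ws j - \<alpha> n j *\<^sub>R w) sums V n"
      unfolding V_def by (intro sums_diff sws sc)
    then show ?thesis by (simp add: v_def scaleR_right_diff_distrib)
  qed
  have Sxl: "Sx \<longlonglongrightarrow> x" using ax unfolding A_conv_def Sx_def by auto
  have Syl: "Sy \<longlonglongrightarrow> y" using ay unfolding A_conv_def Sy_def by auto
  have Szl: "Sz \<longlonglongrightarrow> z" using az unfolding A_conv_def Sz_def by auto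
  have sl: "s \<longlonglongrightarrow> 1" using s1 unfolding s_def .
  have "U \<longlonglongrightarrow> (x - 1 *\<^sub>R x) + (y - 1 *\<^sub>R y) + (z - 1 *\<^sub>R z)"
    unfolding U_def by (intro tendsto_intros Sxl Syl Szl sl)
  then have U0: "U \<longlonglongrightarrow> 0" by simp
  have bound: "norm (V n) \<le> C * norm (U n)" for n
  proof -
    have L1: "(\<lambda>N. norm (\<Sum>j<N. \<alpha> n j *\<^sub>R v j)) \<longlonglongrightarrow> norm (V n)"
      using sv[of n] unfolding sums_def by (intro tendsto_norm)
    have L2: "(\<lambda>N. C * norm (\<Sum>j<N. \<alpha> n j *\<^sub>R u j)) \<longlonglongrightarrow> C * norm (U n)"
      using su[of n] unfolding sums_def by (intro tendsto_mult_left tendsto_norm)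
    have le: "norm (\<Sum>j<N. \<alpha> n j *\<^sub>R v j) \<le> C * norm (\<Sum>j<N. \<alpha> n j *\<^sub>R u j)" for N
      using ineq C assms(2) by (intro partial_bound) (auto simp: u_def v_def)
    show ?thesis
      by (rule tendsto_le[OF trivial_limit_sequentially L2 L1]) (simp add: le)
  qed
  have "(\<lambda>n. C * norm (U n)) \<longlonglongrightarrow> C * norm (0::'a)"
    by (rule tendsto_mult_left[OF tendsto_norm[OF U0]])
  then have Ub: "(\<lambda>n. C * norm (U n)) \<longlonglongrightarrow> 0" by simp
  have "(\<lambda>n. norm (V n)) \<longlonglongrightarrow> 0"
    by (rule tendsto_sandwich[OF _ _ tendsto_const Ub]) (simp_all add: bound)
  then have V0: "V \<longlonglongrightarrow> 0" by (simp add: tendsto_norm_zero_iff)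
  have "(\<lambda>n. V n + s n *\<^sub>R w) \<longlonglongrightarrow> 0 + 1 *\<^sub>R w"
    by (intro tendsto_intros V0 sl)
  then have "Sw \<longlonglongrightarrow> w" by (simp add: V_def)
  then show "A_conv \<alpha> ws w" unfolding A_conv_def Sw_def using sw by auto
qed

end
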